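(* Let $\alpha>0$, $h>0$, $D_x>0$, $D_y>0$, $A>0$, and let $x_m\sim\mathrm{Unif}[0,D_x]$, $y_m\sim\mathrm{Unif}[-D_y/2,D_y/2]$ be independent. Then the average rate $R_p=\mathbb{E}\left[\log_2\left(1+\frac{Ae^{-\alpha x_m}}{y_m^2+h^2}\right)\right]$ equals $$R_p=\frac{1}{D_xD_y}\Bigg(\frac{D_y}{\alpha\ln 2}\left(\mathrm{Li}_2\!\left(\frac{-Ae^{-\alpha D_x}}{h^2+\frac{D_y^2}{4}}\right)-\mathrm{Li}_2\!\left(\frac{-A}{h^2+\frac{D_y^2}{4}}\right)\right)-\frac{4hD_x}{\ln 2}\tan^{-1}\!\left(\frac{D_y}{2h}\right)-\frac{8}{\alpha\ln 2}\Big[F(x)\Big]_{\sqrt{A+h^2}}^{\sqrt{Ae^{-\alpha D_x}+h^2}}\Bigg),$$ where $[F(x)]_a^b=F(b)-F(a)$ and, for $x>h$, $$F(x)=\frac{D_y}{4}\ln\left(\frac{D_y^2}{4}+x^2\right)+x\tan^{-1}\!\left(\frac{D_y}{2x}\right)+\frac{h}{2}\tan^{-1}\!\left(\frac{D_y}{2x}\right)\ln\left(\frac{x-h}{x+h}\right)+\frac{h}{4}\big(z(x,h)-z(x,-h)\big),$$ $$z(x,y)=2\ln(x-y)\left(\tan^{-1}\!\left(\frac{2x}{D_y}\right)-\tan^{-1}\!\left(\frac{2y}{D_y}\right)\right)+2\,\mathrm{Im}\left\{\mathrm{Li}_2\!\left(\frac{y-x}{y-j\frac{D_y}{2}}\r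ight)\right\}.$$
   Context: This is the ergodic rate of a single-pinching-antenna system where the antenna is placed at $x_p=x_m$ directly above the user's $x$-coordinate on a waveguide at height $h$ with absorption coefficient $\alpha$; $A=\frac{\eta P_t}{\sigma^2}$ with $\eta,P_t,\sigma^2>0$. $\mathrm{Li}_2$ is the dilogarithm, $\mathrm{Li}_2(w)=-\int_0^w\frac{\ln(1-u)}{u}\,du$ (principal branch for complex arguments), $j$ is the imaginary unit, and $\mathrm{Im}$ denotes the imaginary part. *)

theory Defs
  imports "HOL-Analysis.Analysis" "HOL-Complex_Analysis.Complex_Analysis"
begin

definition Li2 :: "complex \<Rightarrow> complex" where
  "Li2 w = - contour_integral (linepath 0 w) (\<lambda>u. Ln (1 - u) / u)"

definition zfun :: "real \<Rightarrow> real \<Rightarrow> real \<Rightarrow> real" where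
  "zfun Dy x y = 2 * ln (x - y) * (arctan (2 * x / Dy) - arctan (2 * y / Dy))
      + 2 * Im (Li2 ((complex_of_real (y - x)) / (complex_of_real y - \<i> * complex_of_real (Dy / 2))))"

definition Ffun :: "real \<Rightarrow> real \<Rightarrow> real \<Rightarrow> real" where
  "Ffun Dy h x = Dy / 4 * ln (Dy^2 / 4 + x^2) + x * arctan (Dy / (2 * x))
      + h / 2 * arctan (Dy / (2 * x)) * ln ((x - h) / (x + h))
      + h / 4 * (zfun Dy x h - zfun Dy x (- h))"

end

theory Submission
  imports Defs
begin


definition Sdom :: "complex set" where "Sdom = - {w. Im w = 0 \<and> 1 \<le> Re w}"

lemma open_Sdom: "open Sdom"
proof -
  have "{w. Im w = 0 \<and> 1 \<le> Re w} = {w. Im w = 0} \<inter> {w. Re w \<ge> 1}" by auto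
  then show ?thesis unfolding Sdom_def
    by (metis closed_Int closed_halfspace_Im_eq closed_halfspace_Re_ge open_Compl)
qed

lemma Sdom_nonpos: "w \<in> Sdom \<Longrightarrow> 1 - w \<notin> \<real>\<^sub>\<le>\<^sub>0"
  by (auto simp: Sdom_def complex_nonpos_Reals_iff)

lemma Sdom_seg: "w \<in> Sdom \<Longrightarrow> closed_segment 0 w \<subseteq> Sdom"
proof
  fix u assume w: "w \<in> Sdom" and u: "u \<in> closed_segment 0 w"
  then obtain t where t: "0 \<le> t" "t \<le> 1" "u = t *\<^sub>R w"
    by (auto simp: closed_segment_def)
  show "u \<in> Sdom"
  proof (rule ccontr)
    assume "u \<notin> Sdom"
    then have "Im u = 0" "1 \<le> Re u" by (auto simp: Sdom_def)
    with t have "t > 0" by (cases "t = 0") auto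
    with t \<open>Im u = 0\<close> have "Im w = 0" by simp
    from t \<open>1 \<le> Re u\<close> have tw: "1 \<le> t * Re w" by simp
    have "1 \<le> Re w"
    proof (cases "0 \<le> Re w")
      case True
      then have "t * Re w \<le> Re w" using t by (intro mult_left_le_one_le) auto
      then show ?thesis using tw by linarith
    next
      case False
      then have "t * Re w \<le> 0" using t by (simp add: mult_nonneg_nonpos)
      then show ?thesis using tw by linarith
    qed
    with \<open>Im w = 0\<close> w show False by (auto simp: Sdom_def)
  qed
qed

lemma zero_Sdom: "0 \<in> Sdom" by (simp add: Sdom_def)

definition fL :: "complex \<Rightarrow> complex" where
  "fL u = (if u = 0 then -1 else Ln (1 - u) / u)"

lemma fL_lim0: "((\<lambda>u. Ln (1 - u) / u) \<longlongrightarrow> -1) (at 0)"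
proof -
  have "((\<lambda>u. Ln (1 - u)) has_field_derivative inverse (1 - 0) * (-1)) (at 0)"
    by (rule DERIV_chain2[where f=Ln]) (auto intro!: has_field_derivative_Ln derivative_eq_intros)
  then have "((\<lambda>y. (Ln (1 - y) - Ln (1 - 0)) / (y - 0)) \<longlongrightarrow> inverse (1 - 0) * (-1)) (at 0)"
    by (simp add: has_field_derivative_iff)
  then show ?thesis by simp
qed

lemma fL_ev: "x \<noteq> 0 \<Longrightarrow> \<forall>\<^sub>F u in nhds x. Ln (1 - u) / u = fL u"
proof -
  assume "x \<noteq> 0"
  then have "\<forall>\<^sub>F u in nhds x. u \<noteq> 0" by (rule t1_space_nhds)
  then show ?thesis by (rule eventually_mono) (simp add: fL_def)
qed

lemma fL_cont: "continuous_on Sdom fL"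
proof (clarsimp simp: continuous_on_eq_continuous_at open_Sdom)
  fix x assume x: "x \<in> Sdom"
  show "isCont fL x"
  proof (cases "x = 0")
    case True
    have "(fL \<longlongrightarrow> -1) (at 0)"
      by (rule Lim_transform_eventually[OF fL_lim0]) (auto simp: eventually_at_filter fL_def)
    then show ?thesis using True by (simp add: continuous_at fL_def)
  next
    case False
    have "isCont (\<lambda>u. Ln (1 - u) / u) x"
      using False Sdom_nonpos[OF x] by (auto intro!: continuous_intros)
    moreover have "isCont (\<lambda>u. Ln (1 - u) / u) x \<longleftrightarrow> isCont fL x"
      by (rule isCont_cong[OF fL_ev[OF False]])
    ultimately show ?thesis by (rule iffD1[rotated])
  qed
qed

lemma fL_diff: "x \<in> Sdom - {0} \<Longrightarrow> fL field_differentiable at x"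
proof -
  assume x: "x \<in> Sdom - {0}"
  have dl: "((\<lambda>u. Ln (1 - u)) has_field_derivative inverse (1 - x) * (-1)) (at x)"
    using x Sdom_nonpos[of x]
    by (intro DERIV_chain2[where f=Ln]) (auto intro!: has_field_derivative_Ln derivative_eq_intros)
  define f' where "f' = (inverse (1 - x) * (-1) * x - Ln (1 - x) * 1) / (x * x)"
  have d: "((\<lambda>u. Ln (1 - u) / u) has_field_derivative f') (at x)"
    unfolding f'_def by (rule DERIV_divide[OF dl DERIV_ident]) (use x in simp)
  have ev: "\<forall>\<^sub>F u in nhds x. Ln (1 - u) / u = fL u"
    using x by (intro fL_ev) simp
  have "(fL has_field_derivative f') (at x)"
    using d has_field_derivative_cong_ev[of x x UNIV "\<lambda>u. Ln (1 - u) / u" fL f' f'] ev by simp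
  then show ?thesis unfolding field_differentiable_def by blast
qed

lemma fL_prim: "w \<in> Sdom \<Longrightarrow> ((\<lambda>x. contour_integral (linepath 0 x) fL) has_field_derivative fL w) (at w)"
proof (rule triangle_contour_integrals_starlike_primitive[OF fL_cont zero_Sdom open_Sdom])
  show "\<And>y. y \<in> Sdom \<Longrightarrow> closed_segment 0 y \<subseteq> Sdom" by (rule Sdom_seg)
  fix b c assume bc: "closed_segment b c \<subseteq> Sdom"
  then have abcs: "convex hull {0, b, c} \<subseteq> Sdom"
    using Sdom_seg zero_Sdom by (simp add: starlike_convex_subset)
  then have "continuous_on (convex hull {0, b, c}) fL"
    by (simp add: continuous_on_subset [OF fL_cont])
  then have "(fL has_contour_integral 0) (linepath 0 b +++ linepath b c +++ linepath c 0)"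
  proof (rule Cauchy_theorem_triangle_cofinite[where S="{0}"])
    fix x assume "x \<in> interior (convex hull {0, b, c}) - {0}"
    then have "x \<in> Sdom - {0}" using abcs interior_subset by blast
    then show "fL field_differentiable at x" by (rule fL_diff)
  qed auto
  then show "contour_integral (linepath 0 b) fL + contour_integral (linepath b c) fL +
      contour_integral (linepath c 0) fL = 0"
    by (rule has_chain_integral_chain_integral3)
qed

lemma Li2_eq: "w \<noteq> 0 \<Longrightarrow> Li2 w = - contour_integral (linepath 0 w) fL"
proof -
  assume w: "w \<noteq> 0"
  have "\<And>i. ((\<lambda>u. Ln (1 - u) / u) has_contour_integral i) (linepath 0 w) \<longleftrightarrow> (fL has_contour_integral i) (linepath 0 w)"
    unfolding has_contour_integral_def
    by (rule has_integral_spike_finite_eq[of "{0}"]) (use w in \<open>auto simp: fL_def linepath_def\<close>)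
  then have "contour_integral (linepath 0 w) (\<lambda>u. Ln (1 - u) / u) = contour_integral (linepath 0 w) fL"
    unfolding contour_integral_def contour_integrable_on_def by simp
  then show ?thesis by (simp add: Li2_def)
qed

lemma Li2_deriv: assumes "w \<in> Sdom" "w \<noteq> 0"
  shows "(Li2 has_field_derivative - (Ln (1 - w) / w)) (at w)"
proof -
  have "((\<lambda>x. - contour_integral (linepath 0 x) fL) has_field_derivative - fL w) (at w)"
    using fL_prim[OF assms(1)] by (rule DERIV_minus)
  moreover have "open (Sdom - {0})" using open_Sdom by auto
  ultimately have "(Li2 has_field_derivative - fL w) (at w)"
  proof (rule has_field_derivative_transform_within_open)
    show "w \<in> Sdom - {0}" using assms by simp
    show "\<And>x. x \<in> Sdom - {0} \<Longrightarrow> - contour_integral (linepath 0 x) fL = Li2 x"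
      using Li2_eq by simp
  qed
  then show ?thesis using assms by (simp add: fL_def)
qed

lemma one_sq_pos: "0 < 1 + (t::real)^2"
  by (intro add_pos_nonneg) auto

lemma sqrt_one_sq_pos: "0 < sqrt (1 + (t::real)^2)"
  using one_sq_pos by simp

lemma exp_ii: "exp (\<i> * complex_of_real a) = Complex (cos a) (sin a)"
  by (metis cis.code cis_conv_exp)

lemma polar_lower:
  fixes D y :: real assumes D: "D > 0"
  shows "Complex y (-D/2) = of_real ((D/2) * sqrt (1 + (2*y/D)^2)) * exp (\<i> * of_real (arctan (2*y/D) - pi/2))"
proof -
  define t where "t = 2*y/D"
  have sq: "sqrt (1 + t^2) > 0" by (rule sqrt_one_sq_pos)
  have y: "y = D/2 * t" using D by (simp add: t_def)
  have "exp (\<i> * of_real (arctan t - pi/2)) = Complex (cos (arctan t - pi/2)) (sin (arctan t - pi/2))"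
    by (rule exp_ii)
  also have "\<dots> = Complex (t / sqrt (1 + t^2)) (- (1 / sqrt (1 + t^2)))"
    by (simp add: cos_diff sin_diff sin_arctan cos_arctan)
  finally show ?thesis using sq unfolding t_def[symmetric] y
    by (simp add: complex_eq_iff)
qed

lemma Arg_quot:
  fixes D x y :: real assumes D: "D > 0" and xy: "y < x"
  shows "Im (Ln (Complex x (-D/2) / Complex y (-D/2))) = arctan (2*x/D) - arctan (2*y/D)"
proof -
  define r1 where "r1 = (D/2) * sqrt (1 + (2*x/D)^2)"
  define r2 where "r2 = (D/2) * sqrt (1 + (2*y/D)^2)"
  define a1 where "a1 = arctan (2*x/D) - pi/2"
  define a2 where "a2 = arctan (2*y/D) - pi/2"
  have r1: "r1 > 0" and r2: "r2 > 0" using D sqrt_one_sq_pos by (simp_all add: r1_def r2_def)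
  have e1: "Complex x (-D/2) = of_real r1 * exp (\<i> * of_real a1)"
    unfolding r1_def a1_def by (rule polar_lower[OF D])
  have e2: "Complex y (-D/2) = of_real r2 * exp (\<i> * of_real a2)"
    unfolding r2_def a2_def by (rule polar_lower[OF D])
  have "Complex x (-D/2) / Complex y (-D/2) = (of_real r1 * exp (\<i> * of_real a1)) / (of_real r2 * exp (\<i> * of_real a2))"
    by (simp only: e1 e2)
  also have "\<dots> = of_real (r1 / r2) * exp (\<i> * of_real (a1 - a2))"
    using r2 by (simp add: exp_diff algebra_simps)
  finally have eq: "of_real (r1 / r2) * exp (\<i> * of_real (a1 - a2)) = Complex x (-D/2) / Complex y (-D/2)" ..
  have lt: "arctan (2*y/D) < arctan (2*x/D)" using D xy by (simp add: arctan_less_iff divide_strict_right_mono)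
  have b: "- (pi/2) < arctan (2*y/D)" "arctan (2*x/D) < pi/2" by (rule arctan_lbound, rule arctan_ubound)
  have "Arg (Complex x (-D/2) / Complex y (-D/2)) = a1 - a2"
    by (rule Arg_unique[OF eq]) (use lt r1 r2 b in \<open>auto simp: a1_def a2_def\<close>)
  moreover have "Complex x (-D/2) \<noteq> 0" "Complex y (-D/2) \<noteq> 0" using D by (auto simp: complex_eq_iff)
  then have "Complex x (-D/2) / Complex y (-D/2) \<noteq> 0" by simp
  ultimately show ?thesis by (simp add: Arg_eq_Im_Ln a1_def a2_def del: Complex_eq_0)
qed

lemma zfun_deriv:
  fixes D x y :: real assumes D: "D > 0" and xy: "y < x"
  shows "((\<lambda>t. zfun D t y) has_real_derivative 4 * D * ln (x - y) / (D^2 + 4 * x^2)) (at x)"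
proof -
  define Y where "Y = complex_of_real y - \<i> * complex_of_real (D/2)"
  have Yc: "Y = Complex y (-D/2)" by (simp add: Y_def complex_eq_iff)
  have Y0: "Y \<noteq> 0" using D by (simp add: Yc complex_eq_iff)
  define c where "c = complex_of_real (y - x) / Y"
  have ImY: "Im c \<noteq> 0"
  proof -
    have "Im c = (y - x) * (D/2) / (y^2 + (D/2)^2)"
      by (simp add: c_def Yc Im_divide power2_eq_square)
    moreover have "y^2 + (D/2)^2 > 0" using D by (simp add: add_nonneg_pos)
    ultimately show ?thesis using D xy by simp
  qed
  then have cS: "c \<in> Sdom" and c0: "c \<noteq> 0" by (auto simp: Sdom_def)
  have dLi: "((\<lambda>z. Li2 ((of_real y - z) / Y)) has_field_derivative (- (Ln (1 - c) / c)) * (- 1 / Y)) (at (of_real x))"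
  proof (rule DERIV_chain2[where f=Li2])
    show "(Li2 has_field_derivative - (Ln (1 - c) / c)) (at ((complex_of_real y - complex_of_real x) / Y))"
      using Li2_deriv[OF cS c0] by (simp add: c_def)
    show "((\<lambda>z. (complex_of_real y - z) / Y) has_field_derivative - 1 / Y) (at (complex_of_real x))"
      using Y0 by (auto intro!: derivative_eq_intros simp: field_simps)
  qed
  have "((\<lambda>t. Li2 ((of_real y - of_real t) / Y)) has_vector_derivative (- (Ln (1 - c) / c)) * (- 1 / Y)) (at x)"
    by (rule has_vector_derivative_real_field[OF dLi])
  then have dIm: "((\<lambda>t. Im (Li2 ((of_real y - of_real t) / Y))) has_real_derivative Im ((- (Ln (1 - c) / c)) * (- 1 / Y))) (at x)"
    by (rule has_field_derivative_Im)
  have cY: "c * Y = complex_of_real (y - x)" using Y0 by (simp add: c_def)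
  have e1: "(- (Ln (1 - c) / c)) * (- 1 / Y) = Ln (1 - c) / complex_of_real (y - x)"
    using Y0 c0 cY by (simp add: field_simps)
  have e2: "1 - c = Complex x (-D/2) / Complex y (-D/2)"
  proof -
    have "1 - c = (Y - of_real (y - x)) / Y" using Y0 by (simp add: c_def field_simps)
    also have "Y - of_real (y - x) = Complex x (-D/2)" by (simp add: Y_def complex_eq_iff)
    finally show ?thesis by (simp add: Yc)
  qed
  have val: "Im ((- (Ln (1 - c) / c)) * (- 1 / Y)) = (arctan (2*x/D) - arctan (2*y/D)) / (y - x)"
    by (simp only: e1) (simp only: e2 Im_divide_of_real Arg_quot[OF D xy])
  have dln: "((\<lambda>t. 2 * ln (t - y) * (arctan (2 * t / D) - arctan (2 * y / D))) has_real_derivative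
      2 * (1 / (x - y)) * (arctan (2 * x / D) - arctan (2 * y / D)) + 2 * ln (x - y) * (inverse (1 + (2 * x / D)^2) * (2 / D))) (at x)"
  proof -
    have d1: "((\<lambda>t. ln (t - y)) has_real_derivative 1 / (x - y)) (at x)"
      using xy by (auto intro!: derivative_eq_intros)
    have d2: "((\<lambda>t. arctan (2 * t / D)) has_real_derivative inverse (1 + (2 * x / D)^2) * (2 / D)) (at x)"
      by (rule DERIV_chain2[OF DERIV_arctan]) (use D in \<open>auto intro!: derivative_eq_intros\<close>)
    have "((\<lambda>t. arctan (2 * t / D) - arctan (2 * y / D)) has_real_derivative inverse (1 + (2 * x / D)^2) * (2 / D) - 0) (at x)"
      by (rule DERIV_diff[OF d2 DERIV_const])
    from DERIV_cmult[OF DERIV_mult[OF d1 this], of 2] show ?thesis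
      by (simp add: algebra_simps)
  qed
  have "((\<lambda>t. zfun D t y) has_real_derivative
      (2 * (1 / (x - y)) * (arctan (2 * x / D) - arctan (2 * y / D)) + 2 * ln (x - y) * (inverse (1 + (2 * x / D)^2) * (2 / D)))
      + 2 * ((arctan (2*x/D) - arctan (2*y/D)) / (y - x))) (at x)"
    unfolding zfun_def Y_def[symmetric]
    using DERIV_add[OF dln DERIV_cmult[OF dIm, of 2]] val by (simp add: of_real_diff)
  moreover have "(2 * (1 / (x - y)) * (arctan (2 * x / D) - arctan (2 * y / D)) + 2 * ln (x - y) * (inverse (1 + (2 * x / D)^2) * (2 / D)))
      + 2 * ((arctan (2*x/D) - arctan (2*y/D)) / (y - x)) = 4 * D * ln (x - y) / (D^2 + 4 * x^2)"
  proof -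
    define T where "T = arctan (2*x/D) - arctan (2*y/D)"
    have a: "2 * (1 / (x - y)) * T + 2 * (T / (y - x)) = 0"
      using xy by (simp add: field_simps)
    have "D^2 + 4 * x^2 > 0" using D by (simp add: add_pos_nonneg)
    then have b: "inverse (1 + (2 * x / D)^2) * (2 / D) = 2 * D / (D^2 + 4 * x^2)"
      using D by (simp add: field_simps power2_eq_square)
    show ?thesis unfolding T_def[symmetric] b using a by (simp add: algebra_simps)
  qed
  ultimately show ?thesis by simp
qed

lemma Ffun_deriv:
  fixes D h s :: real assumes D: "D > 0" and h: "h > 0" and hs: "h < s"
  shows "(Ffun D h has_real_derivative s^2 * arctan (D / (2 * s)) / (s^2 - h^2)) (at s)"
proof -
  have s: "s > 0" using h hs by simp
  define K where "K = D^2 + 4 * s^2"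
  have K: "K > 0" unfolding K_def using D by (simp add: add_pos_nonneg)
  define E where "E = s^2 - h^2"
  have E: "E > 0" unfolding E_def using h hs by (simp add: power_strict_mono)
  define Aa where "Aa = arctan (D / (2 * s))"
  define Lq where "Lq = ln ((s - h) / (s + h))"
  have Lq: "ln (s - h) - ln (s + h) = Lq"
    unfolding Lq_def using h hs by (simp add: ln_div)
  have dL: "((\<lambda>x. ln (D^2/4 + x^2)) has_real_derivative 8 * s / K) (at s)"
  proof -
    have "((\<lambda>x. ln (D^2/4 + x^2)) has_real_derivative inverse (D^2/4 + s^2) * (2 * s)) (at s)"
      by (rule DERIV_chain2[OF DERIV_ln]) (use D in \<open>auto intro!: derivative_eq_intros simp: add_pos_nonneg\<close>)
    moreover have "inverse (D^2/4 + s^2) * (2 * s) = 8 * s / K"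
      using K unfolding K_def by (simp add: field_simps)
    ultimately show ?thesis by simp
  qed
  have dA: "((\<lambda>x. arctan (D / (2 * x))) has_real_derivative - 2 * D / K) (at s)"
  proof -
    have "((\<lambda>x. D / (2 * x)) has_real_derivative - (D / (2 * s^2))) (at s)"
      using s by (auto intro!: derivative_eq_intros simp: field_simps power2_eq_square)
    then have "((\<lambda>x. arctan (D / (2 * x))) has_real_derivative inverse (1 + (D / (2 * s))^2) * - (D / (2 * s^2))) (at s)"
      by (rule DERIV_chain2[OF DERIV_arctan])
    moreover have "inverse (1 + (D / (2 * s))^2) * - (D / (2 * s^2)) = - 2 * D / K"
      using K s unfolding K_def by (simp add: field_simps power2_eq_square)
    ultimately show ?thesis by simp
  qed
  have dQ: "((\<lambda>x. ln ((x - h) / (x + h))) has_real_derivative 2 * h / E) (at s)"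
  proof -
    have q: "((\<lambda>x. (x - h) / (x + h)) has_real_derivative ((1 - 0) * (s + h) - (s - h) * (1 + 0)) / ((s + h) * (s + h))) (at s)"
      using h hs by (intro DERIV_divide DERIV_diff DERIV_add DERIV_ident DERIV_const) auto
    have pos: "0 < (s - h) / (s + h)" using h hs by simp
    have r: "((\<lambda>x. ln ((x - h) / (x + h))) has_real_derivative inverse ((s - h) / (s + h)) * (((1 - 0) * (s + h) - (s - h) * (1 + 0)) / ((s + h) * (s + h)))) (at s)"
      by (rule DERIV_chain2[OF DERIV_ln[OF pos] q])
    have n1: "s - h \<noteq> 0" "s + h \<noteq> 0" using h hs by auto
    have "inverse ((s - h) / (s + h)) * (((1 - 0) * (s + h) - (s - h) * (1 + 0)) / ((s + h) * (s + h)))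
        = ((s + h) / (s - h)) * ((2 * h) / ((s + h) * (s + h)))" by simp
    also have "\<dots> = ((s + h) * (2 * h)) / ((s + h) * ((s - h) * (s + h)))"
      by (simp add: times_divide_times_eq ac_simps)
    also have "\<dots> = 2 * h / ((s - h) * (s + h))" by (rule mult_divide_mult_cancel_left[OF n1(2)])
    also have "\<dots> = 2 * h / E" unfolding E_def by (simp add: power2_eq_square algebra_simps)
    finally have "inverse ((s - h) / (s + h)) * (((1 - 0) * (s + h) - (s - h) * (1 + 0)) / ((s + h) * (s + h))) = 2 * h / E" .
    with r show ?thesis by simp
  qed
  have z1: "((\<lambda>t. zfun D t h) has_real_derivative 4 * D * ln (s - h) / K) (at s)"
    using zfun_deriv[OF D hs] by (simp add: K_def)
  have z2: "((\<lambda>t. zfun D t (- h)) has_real_derivative 4 * D * ln (s + h) / K) (at s)"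
    using zfun_deriv[OF D, of "-h" s] h hs by (simp add: K_def)
  have d1: "((\<lambda>x. D / 4 * ln (D^2 / 4 + x^2)) has_real_derivative D / 4 * (8 * s / K)) (at s)"
    using DERIV_cmult[OF dL, of "D/4"] by simp
  have d2: "((\<lambda>x. x * arctan (D / (2 * x))) has_real_derivative s * (- 2 * D / K) + 1 * Aa) (at s)"
    unfolding Aa_def by (rule DERIV_mult'[OF DERIV_ident dA])
  have d3: "((\<lambda>x. h / 2 * arctan (D / (2 * x)) * ln ((x - h) / (x + h))) has_real_derivative
      h / 2 * Aa * (2 * h / E) + h / 2 * (- 2 * D / K) * Lq) (at s)"
    unfolding Aa_def Lq_def by (rule DERIV_mult'[OF DERIV_cmult[OF dA] dQ])
  have d4: "((\<lambda>x. h / 4 * (zfun D x h - zfun D x (- h))) has_real_derivative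
      h / 4 * (4 * D * ln (s - h) / K - 4 * D * ln (s + h) / K)) (at s)"
    by (rule DERIV_cmult[OF DERIV_diff[OF z1 z2]])
  have d: "((\<lambda>x. D / 4 * ln (D^2 / 4 + x^2) + x * arctan (D / (2 * x))
      + h / 2 * arctan (D / (2 * x)) * ln ((x - h) / (x + h))
      + h / 4 * (zfun D x h - zfun D x (- h))) has_real_derivative
      D / 4 * (8 * s / K) + (s * (- 2 * D / K) + 1 * Aa)
      + (h / 2 * Aa * (2 * h / E) + h / 2 * (- 2 * D / K) * Lq)
      + h / 4 * (4 * D * ln (s - h) / K - 4 * D * ln (s + h) / K)) (at s)"
    by (rule DERIV_add[OF DERIV_add[OF DERIV_add[OF d1 d2] d3] d4])
  have "D / 4 * (8 * s / K) + (s * (- 2 * D / K) + 1 * Aa)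
      + (h / 2 * Aa * (2 * h / E) + h / 2 * (- 2 * D / K) * Lq)
      + h / 4 * (4 * D * ln (s - h) / K - 4 * D * ln (s + h) / K)
      = D / 4 * (8 * s / K) + (s * (- 2 * D / K) + 1 * Aa)
      + (h / 2 * Aa * (2 * h / E) + h / 2 * (- 2 * D / K) * Lq)
      + h * D * (ln (s - h) - ln (s + h)) / K"
    using K by (simp add: field_simps)
  also have "\<dots> = Aa + h^2 * Aa / E"
    unfolding Lq using K E by (simp add: field_simps power2_eq_square)
  also have "\<dots> = s^2 * arctan (D / (2 * s)) / (s^2 - h^2)"
    using E unfolding Aa_def E_def by (simp add: field_simps)
  finally have eq: "D / 4 * (8 * s / K) + (s * (- 2 * D / K) + 1 * Aa)
      + (h / 2 * Aa * (2 * h / E) + h / 2 * (- 2 * D / K) * Lq)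
      + h / 4 * (4 * D * ln (s - h) / K - 4 * D * ln (s + h) / K) = s^2 * arctan (D / (2 * s)) / (s^2 - h^2)" .
  have "Ffun D h = (\<lambda>x. D / 4 * ln (D^2 / 4 + x^2) + x * arctan (D / (2 * x))
      + h / 2 * arctan (D / (2 * x)) * ln ((x - h) / (x + h))
      + h / 4 * (zfun D x h - zfun D x (- h)))"
    by (rule ext) (simp add: Ffun_def)
  then show ?thesis using DERIV_cong[OF d eq] by simp
qed

lemma Ga_deriv:
  fixes a x :: real assumes a: "a > 0"
  shows "((\<lambda>y. y * ln (y^2 + a^2) - 2 * y + 2 * a * arctan (y / a)) has_real_derivative ln (x^2 + a^2)) (at x)"
proof -
  have p: "x^2 + a^2 > 0" using a by (simp add: add_nonneg_pos)
  have i1: "((\<lambda>y. y^2 + a^2) has_real_derivative 2 * x) (at x)"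
    by (auto intro!: derivative_eq_intros)
  have dln: "((\<lambda>y. ln (y^2 + a^2)) has_real_derivative inverse (x^2 + a^2) * (2 * x)) (at x)"
    by (rule DERIV_chain2[OF DERIV_ln[OF p] i1])
  have i2: "((\<lambda>y. y / a) has_real_derivative 1 / a) (at x)"
    using a by (auto intro!: derivative_eq_intros)
  have dat: "((\<lambda>y. arctan (y / a)) has_real_derivative inverse (1 + (x / a)^2) * (1 / a)) (at x)"
    by (rule DERIV_chain2[OF DERIV_arctan i2])
  have d: "((\<lambda>y. y * ln (y^2 + a^2) - 2 * y + 2 * a * arctan (y / a)) has_real_derivative
     x * (inverse (x^2 + a^2) * (2 * x)) + 1 * ln (x^2 + a^2) - 2 * 1 + 2 * a * (inverse (1 + (x / a)^2) * (1 / a))) (at x)"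
    by (rule DERIV_add[OF DERIV_diff[OF DERIV_mult'[OF DERIV_ident dln] DERIV_cmult[OF DERIV_ident]] DERIV_cmult[OF dat]])
  have e1: "inverse (1 + (x / a)^2) = a^2 / (x^2 + a^2)"
    using a p by (simp add: field_simps power2_eq_square)
  have e2: "x * (inverse (x^2 + a^2) * (2 * x)) = 2 * x^2 / (x^2 + a^2)"
    by (simp add: field_simps power2_eq_square)
  have e3: "2 * a * (a^2 / (x^2 + a^2) * (1 / a)) = 2 * a^2 / (x^2 + a^2)"
    using a by (simp add: field_simps power2_eq_square)
  have e4: "2 * x^2 / (x^2 + a^2) + 2 * a^2 / (x^2 + a^2) = 2"
  proof -
    have "2 * x^2 / (x^2 + a^2) + 2 * a^2 / (x^2 + a^2) = 2 * (x^2 + a^2) / (x^2 + a^2)"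
      by (simp only: add_divide_distrib distrib_left)
    also have "\<dots> = 2" using p by (intro nonzero_mult_div_cancel_right) linarith
    finally show ?thesis .
  qed
  have eq: "x * (inverse (x^2 + a^2) * (2 * x)) + 1 * ln (x^2 + a^2) - 2 * 1 + 2 * a * (inverse (1 + (x / a)^2) * (1 / a))
      = ln (x^2 + a^2)"
    unfolding e1 e2 e3 using e4 by simp
  show ?thesis by (rule DERIV_cong[OF d eq])
qed

definition Ga :: "real \<Rightarrow> real \<Rightarrow> real" where
  "Ga a y = y * ln (y^2 + a^2) - 2 * y + 2 * a * arctan (y / a)"

lemma Ga_diff: "a > 0 \<Longrightarrow> Ga a (D/2) - Ga a (-D/2) = D * ln (D^2/4 + a^2) - 2 * D + 4 * a * arctan (D / (2 * a))"
  unfolding Ga_def by (simp add: arctan_minus power_divide field_simps)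

definition IV :: "real \<Rightarrow> real \<Rightarrow> real \<Rightarrow> real" where
  "IV D h s = (D * ln (D^2/4 + s^2) + 4 * s * arctan (D / (2 * s)) - D * ln (D^2/4 + h^2) - 4 * h * arctan (D / (2 * h))) / ln 2"

lemma inner_int:
  fixes B h D :: real assumes B: "B > 0" and h: "h > 0" and D: "D > 0"
  shows "((\<lambda>y. log 2 (1 + B / (y^2 + h^2))) has_integral IV D h (sqrt (B + h^2))) {-D/2..D/2}"
proof -
  define s where "s = sqrt (B + h^2)"
  have s: "s > 0" unfolding s_def using B by (simp add: add_pos_nonneg)
  have s2: "s^2 = B + h^2" unfolding s_def using B by (simp add: add_pos_nonneg)
  define G where "G y = (Ga s y - Ga h y) / ln 2" for y
  have dG: "(G has_real_derivative log 2 (1 + B / (y^2 + h^2))) (at y)" for y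
  proof -
    have d: "(G has_real_derivative (ln (y^2 + s^2) - ln (y^2 + h^2)) / ln 2) (at y)"
      unfolding G_def[abs_def] Ga_def
      by (intro DERIV_cdivide DERIV_diff Ga_deriv[OF s] Ga_deriv[OF h])
    have p1: "y^2 + h^2 > 0" using h by (simp add: add_nonneg_pos)
    have "(y^2 + s^2) / (y^2 + h^2) = ((y^2 + h^2) + B) / (y^2 + h^2)"
      using s2 by (simp add: algebra_simps)
    also have "\<dots> = (y^2 + h^2) / (y^2 + h^2) + B / (y^2 + h^2)" by (rule add_divide_distrib)
    also have "\<dots> = 1 + B / (y^2 + h^2)" using h by simp
    finally have "1 + B / (y^2 + h^2) = (y^2 + s^2) / (y^2 + h^2)" ..
    moreover have "y^2 + s^2 > 0" using s by (simp add: add_nonneg_pos)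
    ultimately have "log 2 (1 + B / (y^2 + h^2)) = (ln (y^2 + s^2) - ln (y^2 + h^2)) / ln 2"
      using p1 h s by (simp add: log_def ln_div)
    then show ?thesis using d by simp
  qed
  have "((\<lambda>y. log 2 (1 + B / (y^2 + h^2))) has_integral (G (D/2) - G (-D/2))) {-D/2..D/2}"
    using D by (intro fundamental_theorem_of_calculus)
       (auto simp: has_real_derivative_iff_has_vector_derivative[symmetric] intro!: has_field_derivative_at_within[OF dG])
  moreover have "G (D/2) - G (-D/2) = IV D h s"
  proof -
    have "G (D/2) - G (-D/2) = ((Ga s (D/2) - Ga s (-D/2)) - (Ga h (D/2) - Ga h (-D/2))) / ln 2"
      unfolding G_def by (simp add: diff_divide_distrib)
    also have "\<dots> = IV D h s" unfolding Ga_diff[OF s] Ga_diff[OF h] IV_def by simp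
    finally show ?thesis .
  qed
  ultimately show ?thesis by (simp add: s_def)
qed

lemma Sdom_neg: "x < 0 \<Longrightarrow> complex_of_real x \<in> Sdom"
  by (simp add: Sdom_def)

lemma Li2_re_deriv:
  fixes w w' t :: real and f :: "real \<Rightarrow> real"
  assumes df: "(f has_real_derivative w') (at t)" and w: "f t < 0"
  shows "((\<lambda>x. Re (Li2 (complex_of_real (f x)))) has_real_derivative Re (complex_of_real w' * - (Ln (1 - complex_of_real (f t)) / complex_of_real (f t)))) (at t)"
proof -
  have v: "((\<lambda>x. complex_of_real (f x)) has_vector_derivative complex_of_real w') (at t)"
    by (rule has_vector_derivative_of_real[OF df])
  have l: "(Li2 has_field_derivative - (Ln (1 - complex_of_real (f t)) / complex_of_real (f t))) (at (complex_of_real (f t)))"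
    using w by (intro Li2_deriv Sdom_neg) auto
  have "((Li2 \<circ> (\<lambda>x. complex_of_real (f x))) has_vector_derivative complex_of_real w' * - (Ln (1 - complex_of_real (f t)) / complex_of_real (f t))) (at t)"
    by (rule field_vector_diff_chain_at[OF v l])
  from has_field_derivative_Re[OF this] show ?thesis by (simp add: o_def)
qed

lemma R_deriv:
  fixes \<alpha> h D A t :: real
  assumes al: "\<alpha> > 0" and h: "h > 0" and D: "D > 0" and A: "A > 0"
  shows "((\<lambda>t. D / (\<alpha> * ln 2) *
              (Re (Li2 (complex_of_real (- A * exp (- \<alpha> * t) / (h^2 + D^2 / 4))))
               - Re (Li2 (complex_of_real (- A / (h^2 + D^2 / 4)))))
          - 4 * h * t / ln 2 * arctan (D / (2 * h))
          - 8 / (\<alpha> * ln 2) *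
              (Ffun D h (sqrt (A * exp (- \<alpha> * t) + h^2)) - Ffun D h (sqrt (A + h^2))))
     has_real_derivative IV D h (sqrt (A * exp (- \<alpha> * t) + h^2))) (at t)"
proof -
  define K where "K = h^2 + D^2 / 4"
  have K: "K > 0" unfolding K_def using h by (simp add: add_pos_nonneg)
  define e where "e = exp (- \<alpha> * t)"
  have e: "e > 0" unfolding e_def by simp
  define s where "s = sqrt (A * e + h^2)"
  have Ae: "A * e > 0" using A e by simp
  have s2: "s^2 = A * e + h^2" unfolding s_def using Ae by (simp add: add_pos_nonneg)
  have s0: "s > 0" unfolding s_def using Ae by (simp add: add_pos_nonneg)
  have hs: "h < s"
  proof -
    have "h^2 < s^2" using s2 Ae by simp
    then show ?thesis using s0 h by (simp add: power_less_imp_less_base)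
  qed
  define w where "w = - A * e / K"
  have w: "w < 0" unfolding w_def using Ae K by (simp add: divide_pos_pos)
  have dw: "((\<lambda>t. - A * exp (- \<alpha> * t) / K) has_real_derivative (- A) * (exp (- \<alpha> * t) * (- \<alpha> * 1)) / K) (at t)"
    by (intro DERIV_cdivide DERIV_cmult DERIV_chain2[OF DERIV_exp] DERIV_ident)
  have dLi: "((\<lambda>t. Re (Li2 (complex_of_real (- A * exp (- \<alpha> * t) / K)))) has_real_derivative
      Re (complex_of_real ((- A) * (exp (- \<alpha> * t) * (- \<alpha> * 1)) / K) * - (Ln (1 - complex_of_real w) / complex_of_real w))) (at t)"
    using Li2_re_deriv[OF dw] w unfolding w_def e_def by simp
  have vLi: "Re (complex_of_real ((- A) * (exp (- \<alpha> * t) * (- \<alpha> * 1)) / K) * - (Ln (1 - complex_of_real w) / complex_of_real w))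
      = \<alpha> * ln (1 - w)"
  proof -
    have "(- A) * (exp (- \<alpha> * t) * (- \<alpha> * 1)) / K = - \<alpha> * w" unfolding w_def e_def by simp
    moreover have "Ln (1 - complex_of_real w) = complex_of_real (ln (1 - w))"
    proof -
      have "1 - complex_of_real w = complex_of_real (1 - w)" by simp
      moreover have "Ln (complex_of_real (1 - w)) = complex_of_real (ln (1 - w))"
        by (rule Ln_of_real) (use w in simp)
      ultimately show ?thesis by simp
    qed
    ultimately have "complex_of_real ((- A) * (exp (- \<alpha> * t) * (- \<alpha> * 1)) / K) * - (Ln (1 - complex_of_real w) / complex_of_real w)
        = complex_of_real (\<alpha> * ln (1 - w))"
      using w by (simp add: field_simps)
    then show ?thesis by simp
  qed
  have dsq: "((\<lambda>t. sqrt (A * exp (- \<alpha> * t) + h^2)) has_real_derivative inverse (sqrt (A * exp (- \<alpha> * t) + h^2)) / 2 * (A * (exp (- \<alpha> * t) * (- \<alpha> * 1)) + 0)) (at t)"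
  proof (rule DERIV_chain2[OF DERIV_real_sqrt])
    show "0 < A * exp (- \<alpha> * t) + h^2" using Ae unfolding e_def by (simp add: add_pos_nonneg)
    show "((\<lambda>t. A * exp (- \<alpha> * t) + h^2) has_real_derivative A * (exp (- \<alpha> * t) * (- \<alpha> * 1)) + 0) (at t)"
      by (intro DERIV_add DERIV_cmult DERIV_chain2[OF DERIV_exp] DERIV_ident DERIV_const)
  qed
  have dF: "((\<lambda>t. Ffun D h (sqrt (A * exp (- \<alpha> * t) + h^2))) has_real_derivative
      s^2 * arctan (D / (2 * s)) / (s^2 - h^2) * (inverse (sqrt (A * exp (- \<alpha> * t) + h^2)) / 2 * (A * (exp (- \<alpha> * t) * (- \<alpha> * 1)) + 0))) (at t)"
    using DERIV_chain2[OF Ffun_deriv[OF D h hs, unfolded s_def e_def] dsq] unfolding s_def e_def by simp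
  have vF: "s^2 * arctan (D / (2 * s)) / (s^2 - h^2) * (inverse (sqrt (A * exp (- \<alpha> * t) + h^2)) / 2 * (A * (exp (- \<alpha> * t) * (- \<alpha> * 1)) + 0))
      = - \<alpha> * s * arctan (D / (2 * s)) / 2"
  proof -
    have h1: "s^2 - h^2 = A * e" using s2 by simp
    have h2: "inverse (sqrt (A * exp (- \<alpha> * t) + h^2)) = 1 / s" unfolding s_def e_def by (simp add: divide_inverse)
    have h3: "A * (exp (- \<alpha> * t) * (- \<alpha> * 1)) + 0 = - \<alpha> * (A * e)" unfolding e_def by simp
    show ?thesis unfolding h1 h2 h3 using s0 Ae e A by (simp add: field_simps power2_eq_square)
  qed
  have dlin: "((\<lambda>t. 4 * h * t / ln 2 * arctan (D / (2 * h))) has_real_derivative 4 * h * 1 / ln 2 * arctan (D / (2 * h))) (at t)"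
    by (intro DERIV_cmult_right DERIV_cdivide DERIV_cmult DERIV_ident)
  have d: "((\<lambda>t. D / (\<alpha> * ln 2) *
              (Re (Li2 (complex_of_real (- A * exp (- \<alpha> * t) / K)))
               - Re (Li2 (complex_of_real (- A / (h^2 + D^2 / 4)))))
          - 4 * h * t / ln 2 * arctan (D / (2 * h))
          - 8 / (\<alpha> * ln 2) *
              (Ffun D h (sqrt (A * exp (- \<alpha> * t) + h^2)) - Ffun D h (sqrt (A + h^2))))
     has_real_derivative D / (\<alpha> * ln 2) * (\<alpha> * ln (1 - w) - 0) - 4 * h * 1 / ln 2 * arctan (D / (2 * h))
        - 8 / (\<alpha> * ln 2) * (- \<alpha> * s * arctan (D / (2 * s)) / 2 - 0)) (at t)"
    by (intro DERIV_diff DERIV_cmult DERIV_const dlin dLi[unfolded vLi] dF[unfolded vF])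
  have eq: "D / (\<alpha> * ln 2) * (\<alpha> * ln (1 - w) - 0) - 4 * h * 1 / ln 2 * arctan (D / (2 * h))
        - 8 / (\<alpha> * ln 2) * (- \<alpha> * s * arctan (D / (2 * s)) / 2 - 0) = IV D h s"
  proof -
    have "1 - w = (D^2/4 + s^2) / (D^2/4 + h^2)"
      unfolding w_def using K s2 by (simp add: K_def field_simps)
    moreover have "D^2/4 + s^2 > 0" "D^2/4 + h^2 > 0" using s0 h by (simp_all add: add_nonneg_pos)
    ultimately have lnw: "ln (1 - w) = ln (D^2/4 + s^2) - ln (D^2/4 + h^2)" by (simp add: ln_div)
    show ?thesis unfolding IV_def lnw using al by (simp add: field_simps)
  qed
  show ?thesis using DERIV_cong[OF d eq] unfolding K_def s_def e_def by simp
qed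

theorem proposition3:
  fixes \<alpha> h Dx Dy A :: real
  assumes "\<alpha> > 0" "h > 0" "Dx > 0" "Dy > 0" "A > 0"
  shows "(1 / (Dx * Dy)) * integral ({0..Dx} \<times> {-Dy/2..Dy/2})
            (\<lambda>(xm, ym). log 2 (1 + A * exp (- \<alpha> * xm) / (ym^2 + h^2)))
       = (1 / (Dx * Dy)) *
          ( Dy / (\<alpha> * ln 2) *
              (Re (Li2 (complex_of_real (- A * exp (- \<alpha> * Dx) / (h^2 + Dy^2 / 4))))
               - Re (Li2 (complex_of_real (- A / (h^2 + Dy^2 / 4)))))
          - 4 * h * Dx / ln 2 * arctan (Dy / (2 * h))
          - 8 / (\<alpha> * ln 2) *
              (Ffun Dy h (sqrt (A * exp (- \<alpha> * Dx) + h^2)) - Ffun Dy h (sqrt (A + h^2))))"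
proof -
  note al = assms(1) and h = assms(2) and Dx = assms(3) and Dy = assms(4) and A = assms(5)
  define R where "R t = Dy / (\<alpha> * ln 2) *
              (Re (Li2 (complex_of_real (- A * exp (- \<alpha> * t) / (h^2 + Dy^2 / 4))))
               - Re (Li2 (complex_of_real (- A / (h^2 + Dy^2 / 4)))))
          - 4 * h * t / ln 2 * arctan (Dy / (2 * h))
          - 8 / (\<alpha> * ln 2) *
              (Ffun Dy h (sqrt (A * exp (- \<alpha> * t) + h^2)) - Ffun Dy h (sqrt (A + h^2)))" for t
  define g where "g x y = log 2 (1 + A * exp (- \<alpha> * x) / (y^2 + h^2))" for x y
  have fg: "(\<lambda>(xm, ym). log 2 (1 + A * exp (- \<alpha> * xm) / (ym^2 + h^2))) = (\<lambda>p. g (fst p) (snd p))"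
    by (simp add: g_def case_prod_unfold)
  have pos: "0 < 1 + A * exp (- \<alpha> * x) / (y^2 + h^2)" for x y
  proof -
    have "y^2 + h^2 > 0" using h by (simp add: add_nonneg_pos)
    then have "A * exp (- \<alpha> * x) / (y^2 + h^2) > 0" using A by simp
    then show ?thesis by simp
  qed
  have pos2: "1 + A * exp (- (\<alpha> * x)) / (y^2 + h^2) \<noteq> 0" for x y
    using pos[of x y] by simp
  have cont: "continuous_on UNIV (\<lambda>p. g (fst p) (snd p))"
    unfolding g_def
    by (intro continuous_intros) (use pos pos2 h in \<open>auto simp: add_nonneg_pos\<close>)
  have box: "cbox (0, - Dy / 2) (Dx, Dy / 2) = {0..Dx} \<times> {-Dy/2..Dy/2}"
    unfolding cbox_Pair_eq by (simp add: cbox_interval)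
  have "integral ({0..Dx} \<times> {-Dy/2..Dy/2}) (\<lambda>p. g (fst p) (snd p))
      = integral {0..Dx} (\<lambda>x. integral {-Dy/2..Dy/2} (\<lambda>y. g x y))"
    using integral_prod_continuous[of 0 "- Dy / 2" Dx "Dy / 2" "\<lambda>p. g (fst p) (snd p)"]
      continuous_on_subset[OF cont] unfolding box by (simp add: cbox_interval)
  also have "\<dots> = integral {0..Dx} (\<lambda>x. IV Dy h (sqrt (A * exp (- \<alpha> * x) + h^2)))"
  proof (rule integral_cong)
    fix x
    have "A * exp (- \<alpha> * x) > 0" using A by simp
    from inner_int[OF this h Dy] show "integral {-Dy/2..Dy/2} (g x) = IV Dy h (sqrt (A * exp (- \<alpha> * x) + h^2))"
      unfolding g_def[abs_def] by (simp add: integral_unique)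
  qed
  also have "\<dots> = R Dx - R 0"
  proof (rule integral_unique, rule fundamental_theorem_of_calculus)
    show "0 \<le> Dx" using Dx by simp
    fix x assume "x \<in> {0..Dx}"
    have "(R has_real_derivative IV Dy h (sqrt (A * exp (- \<alpha> * x) + h^2))) (at x)"
      unfolding R_def[abs_def] by (rule R_deriv[OF al h Dy A])
    then show "(R has_vector_derivative IV Dy h (sqrt (A * exp (- \<alpha> * x) + h^2))) (at x within {0..Dx})"
      by (simp add: has_real_derivative_iff_has_vector_derivative[symmetric] has_field_derivative_at_within)
  qed
  also have "R 0 = 0" unfolding R_def by simp
  finally show ?thesis unfolding fg R_def by simp
qed

end
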